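(* Let $X$ be a real normed space, $f:X\to\mathbb R\cup\{+\infty\}$ proper, $\bar x\in(\partial f)^{-1}(0)$, and $p,q\in(1,\infty)$ with $p^{-1}+q^{-1}=1$. Suppose $(\partial f)^{-1}:X^*\rightrightarrows X$ is lower hemicontinuous at $0$. Then the following are equivalent: (i) there exist $\delta\in(0,+\infty]$ and $\gamma\in(0,+\infty)$ such that $f(x)\ge f(\bar x)+\gamma\|x-\bar x\|^p$ for all $x\in\mathbb B(\bar x,\delta)$; (ii) $\partial f:X\rightrightarrows X^*$ is strongly $\frac qp$-subregular at $\bar x$ (for some parameters $\alpha\in(0,+\infty]$, $\kappa\in(0,+\infty)$).
   Context: $\partial f(x):=\{\xi\in X^*: x\text{ is a global minimizer of } f-\langle\xi,\cdot\rangle\}$; $(\partial f)^{-1}(\xi)=\{x:\xi\in\partial f(x)\}$. $\mathbb B(x,+\infty)=X$. A set-valued map $\mathcal F:X\rightrightarrows Y$ is lower hemicontinuous at $\bar y$ if for every open $V$ with $\mathcal F(\bar y)\cap V\ne\emptyset$ there is a neighborhood $U$ of $\bar y$ with $\mathcal F(y)\cap V\neq\emptyset$ for all $y\in U$. $\mathcal F$ is strongly $\lambda$-subregular at $\bar x\in\mathcal F^{-1}(0)$ with parameters $\alpha\in(0,+\infty]$, $\kappa\in(0,+\infty)$ if $\|x-\bar x\|\le\kappa\, d(0,\mathcal F(x))^\lambda$ for all $x\in\mathbb B(\bar x,\alpha)$, where $d(0,\mathcal F(x))=\inf\{\|y\|:y\in\mathcal F(x)\}$. *)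

theory Defs
  imports "HOL-Analysis.Analysis"
begin

text \<open>Extended-real valued functions; the dual space X* is the space of bounded
linear functionals (blinfun, a to real) with the operator norm.\<close>

definition proper_fun :: "('a \<Rightarrow> ereal) \<Rightarrow> bool" where
  "proper_fun f \<longleftrightarrow> (\<forall>x. f x \<noteq> -\<infinity>) \<and> (\<exists>x. f x \<noteq> \<infinity>)"

definition subdiff :: "('a::real_normed_vector \<Rightarrow> ereal) \<Rightarrow> 'a \<Rightarrow> ('a \<Rightarrow>\<^sub>L real) set" where
  "subdiff f x = {\<xi>. \<forall>y. f x - ereal (blinfun_apply \<xi> x) \<le> f y - ereal (blinfun_apply \<xi> y)}"

definition inv_setmap :: "('a \<Rightarrow> 'b set) \<Rightarrow> 'b \<Rightarrow> 'a set" where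
  "inv_setmap F y = {x. y \<in> F x}"

text \<open>Ball with radius in (0, +infinity]; radius +infinity gives the whole space.\<close>
definition eball :: "'a::metric_space \<Rightarrow> ereal \<Rightarrow> 'a set" where
  "eball x r = {y. ereal (dist y x) \<le> r}"

definition lower_hemicontinuous_at :: "('b::topological_space \<Rightarrow> 'a::topological_space set) \<Rightarrow> 'b \<Rightarrow> bool" where
  "lower_hemicontinuous_at F y0 \<longleftrightarrow>
     (\<forall>V. open V \<and> F y0 \<inter> V \<noteq> {} \<longrightarrow>
        (\<exists>U. open U \<and> y0 \<in> U \<and> (\<forall>y\<in>U. F y \<inter> V \<noteq> {})))"

text \<open>Strong lambda-subregularity; d(0,F x) = inf of norms, = +infinity if F x is empty
  (then the inequality holds trivially).\<close>
definition strongly_subregular ::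
  "('a::real_normed_vector \<Rightarrow> 'b::real_normed_vector set) \<Rightarrow> 'a \<Rightarrow> real \<Rightarrow> ereal \<Rightarrow> real \<Rightarrow> bool" where
  "strongly_subregular F xbar lam \<alpha> \<kappa> \<longleftrightarrow>
     0 \<in> F xbar \<and>
     (\<forall>x\<in>eball xbar \<alpha>. F x = {} \<or> norm (x - xbar) \<le> \<kappa> * (Inf (norm ` F x)) powr lam)"

end

theory Submission
  imports Defs
begin

definition good :: "'a::real_normed_vector \<Rightarrow> ('a \<times> real) set \<Rightarrow> bool" where
 "good v G \<longleftrightarrow> (\<forall>x a b. (x,a)\<in>G \<longrightarrow> (x,b)\<in>G \<longrightarrow> a=b)
   \<and> (\<forall>x a y b. (x,a)\<in>G \<longrightarrow> (y,b)\<in>G \<longrightarrow> (x+y,a+b)\<in>G)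
   \<and> (\<forall>x a c. (x,a)\<in>G \<longrightarrow> (c *\<^sub>R x, c*a)\<in>G)
   \<and> (\<forall>x a. (x,a)\<in>G \<longrightarrow> a \<le> norm x) \<and> (v, norm v)\<in>G"

lemma good_init: "good v {(c *\<^sub>R v, c * norm v) | c. True}"
proof -
  have f: "c * norm v = d * norm v" if "c *\<^sub>R v = d *\<^sub>R v" for c d
  proof (cases "v = 0")
    case False
    then have "c = d" using that by (simp add: scaleR_cancel_right)
    then show ?thesis by simp
  qed simp
  have n: "c * norm v \<le> norm (c *\<^sub>R v)" for c
    by (simp add: mult_right_mono)
  let ?G = "{(c *\<^sub>R v, c * norm v) | c. True}"
  show ?thesis unfolding good_def
  proof (intro conjI allI impI)
    fix x a b assume "(x,a) \<in> ?G" "(x,b) \<in> ?G"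
    then show "a = b" using f by auto
  next
    fix x a y b assume "(x,a) \<in> ?G" "(y,b) \<in> ?G"
    then obtain c d where "x = c *\<^sub>R v" "a = c * norm v" "y = d *\<^sub>R v" "b = d * norm v" by blast
    then have "x + y = (c + d) *\<^sub>R v" "a + b = (c + d) * norm v" by (auto simp: algebra_simps)
    then show "(x + y, a + b) \<in> ?G" by blast
  next
    fix x a e assume "(x,a) \<in> ?G"
    then obtain c where "x = c *\<^sub>R v" "a = c * norm v" by blast
    then have "e *\<^sub>R x = (e * c) *\<^sub>R v" "e * a = (e * c) * norm v" by auto
    then show "(e *\<^sub>R x, e * a) \<in> ?G" by blast
  next
    fix x a assume "(x,a) \<in> ?G"
    then show "a \<le> norm x" using n by auto
  next
    have "v = 1 *\<^sub>R v" "norm v = 1 * norm v" by auto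
    then show "(v, norm v) \<in> ?G" by blast
  qed
qed

lemma good_union:
  assumes C: "C \<in> chains {G. good v G}" "C \<noteq> {}"
  shows "good v (\<Union>C)"
proof -
  have sub: "\<And>G. G \<in> C \<Longrightarrow> good v G" using C by (auto simp: chains_def)
  have ch: "\<And>A B. A \<in> C \<Longrightarrow> B \<in> C \<Longrightarrow> A \<subseteq> B \<or> B \<subseteq> A"
    using C by (auto simp: chains_def chain_subset_def)
  have two: "\<exists>G\<in>C. p \<in> G \<and> p' \<in> G" if "p \<in> \<Union>C" "p' \<in> \<Union>C" for p p'
  proof -
    from that obtain A B where "A \<in> C" "B \<in> C" "p \<in> A" "p' \<in> B" by auto
    then show ?thesis using ch[of A B] by blast
  qed
  obtain G0 where "G0 \<in> C" using C by auto
  show ?thesis unfolding good_def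
  proof (intro conjI allI impI)
    fix x a b assume "(x,a) \<in> \<Union>C" "(x,b) \<in> \<Union>C"
    then obtain G where "G \<in> C" "(x,a)\<in>G" "(x,b)\<in>G" using two by blast
    then show "a = b" using sub unfolding good_def by blast
  next
    fix x a y b assume "(x,a) \<in> \<Union>C" "(y,b) \<in> \<Union>C"
    then obtain G where "G \<in> C" "(x,a)\<in>G" "(y,b)\<in>G" using two by blast
    then show "(x+y,a+b) \<in> \<Union>C" using sub unfolding good_def by blast
  next
    fix x a c assume "(x,a) \<in> \<Union>C"
    then obtain G where "G \<in> C" "(x,a)\<in>G" by blast
    then show "(c *\<^sub>R x, c*a) \<in> \<Union>C" using sub unfolding good_def by blast
  next
    fix x a assume "(x,a) \<in> \<Union>C"
    then obtain G where "G \<in> C" "(x,a)\<in>G" by blast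
    then show "a \<le> norm x" using sub unfolding good_def by blast
  next
    show "(v, norm v) \<in> \<Union>C" using \<open>G0 \<in> C\<close> sub unfolding good_def by blast
  qed
qed

lemma good_extend:
  assumes M: "good v M" and w: "\<forall>a. (w,a) \<notin> M"
  shows "\<exists>G. good v G \<and> M \<subseteq> G \<and> G \<noteq> M"
proof -
  have Mf: "\<And>x a b. (x,a)\<in>M \<Longrightarrow> (x,b)\<in>M \<Longrightarrow> a=b"
   and Ma: "\<And>x a y b. (x,a)\<in>M \<Longrightarrow> (y,b)\<in>M \<Longrightarrow> (x+y,a+b)\<in>M"
   and Ms: "\<And>x a c. (x,a)\<in>M \<Longrightarrow> (c *\<^sub>R x, c*a)\<in>M"
   and Mn: "\<And>x a. (x,a)\<in>M \<Longrightarrow> a \<le> norm x"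
   and Mv: "(v, norm v) \<in> M" using M unfolding good_def by blast+
  have M0: "(0,0) \<in> M" using Ms[OF Mv, of 0] by simp
  define S where "S = {a - norm (x - w) | x a. (x,a) \<in> M}"
  have key: "a - norm (x - w) \<le> norm (y + w) - b" if "(x,a)\<in>M" "(y,b)\<in>M" for x a y b
  proof -
    have "a + b \<le> norm (x + y)" using Mn[OF Ma[OF that]] .
    also have "x + y = (x - w) + (y + w)" by simp
    also have "norm \<dots> \<le> norm (x - w) + norm (y + w)" by (rule norm_triangle_ineq)
    finally show ?thesis by simp
  qed
  define t where "t = Sup S"
  have Sne: "S \<noteq> {}" using M0 unfolding S_def by blast
  have Sbdd: "bdd_above S" unfolding S_def bdd_above_def using key[OF _ M0] by auto
  have t1: "a - norm (x - w) \<le> t" if "(x,a)\<in>M" for x a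
    unfolding t_def by (rule cSup_upper[OF _ Sbdd]) (use that S_def in blast)
  have t2: "t \<le> norm (y + w) - b" if "(y,b)\<in>M" for y b
    unfolding t_def by (rule cSup_least[OF Sne]) (use key[OF _ that] S_def in blast)
  define G where "G = {(x + c *\<^sub>R w, a + c * t) | x a c. (x,a) \<in> M}"
  have dom: "c = c' \<and> x = x' \<and> a = a'" if "(x,a)\<in>M" "(x',a')\<in>M" "x + c *\<^sub>R w = x' + c' *\<^sub>R w" for x a x' a' c c'
  proof -
    have c: "c = c'"
    proof (rule ccontr)
      assume "c \<noteq> c'"
      have "(x' - x, a' - a) \<in> M" using Ma[OF that(2) Ms[OF that(1), of "-1"]] by simp
      from Ms[OF this, of "1/(c - c')"]
      have "((1/(c-c')) *\<^sub>R (x' - x), (1/(c-c')) * (a'-a)) \<in> M" .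
      moreover have "(1/(c-c')) *\<^sub>R (x' - x) = w"
      proof -
        have "x' - x = (c - c') *\<^sub>R w" using that(3) by (simp add: algebra_simps)
        then show ?thesis using \<open>c \<noteq> c'\<close> by simp
      qed
      ultimately show False using w by auto
    qed
    then have "x = x'" using that(3) by simp
    then show ?thesis using c Mf that by blast
  qed
  have "good v G" unfolding good_def
  proof (intro conjI allI impI)
    fix y a b assume "(y,a) \<in> G" "(y,b) \<in> G"
    then obtain x1 a1 c1 x2 a2 c2 where "(x1,a1)\<in>M" "(x2,a2)\<in>M" "y = x1 + c1 *\<^sub>R w" "a = a1 + c1*t"
      "y = x2 + c2 *\<^sub>R w" "b = a2 + c2*t" unfolding G_def by blast
    then show "a = b" using dom[of x1 a1 x2 a2 c1 c2] by auto
  next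
    fix y a y' b assume "(y,a) \<in> G" "(y',b) \<in> G"
    then obtain x1 a1 c1 x2 a2 c2 where "(x1,a1)\<in>M" "(x2,a2)\<in>M" "y = x1 + c1 *\<^sub>R w" "a = a1 + c1*t"
      "y' = x2 + c2 *\<^sub>R w" "b = a2 + c2*t" unfolding G_def by blast
    moreover have "y + y' = (x1 + x2) + (c1 + c2) *\<^sub>R w" "a + b = (a1 + a2) + (c1+c2)*t"
      using calculation by (auto simp: algebra_simps)
    ultimately show "(y + y', a + b) \<in> G" unfolding G_def using Ma by blast
  next
    fix y a c assume "(y,a) \<in> G"
    then obtain x1 a1 c1 where "(x1,a1)\<in>M" "y = x1 + c1 *\<^sub>R w" "a = a1 + c1*t"
      unfolding G_def by blast
    moreover have "c *\<^sub>R y = c *\<^sub>R x1 + (c*c1) *\<^sub>R w" "c * a = c * a1 + (c*c1)*t"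
      using calculation by (auto simp: algebra_simps)
    ultimately show "(c *\<^sub>R y, c * a) \<in> G" unfolding G_def using Ms by blast
  next
    fix y a assume "(y,a) \<in> G"
    then obtain x a1 c where xa: "(x,a1)\<in>M" and y: "y = x + c *\<^sub>R w" and a: "a = a1 + c*t"
      unfolding G_def by blast
    show "a \<le> norm y"
    proof (cases c "0::real" rule: linorder_cases)
      case equal then show ?thesis using Mn[OF xa] a y by simp
    next
      case greater
      have "((1/c) *\<^sub>R x, (1/c) * a1) \<in> M" using Ms[OF xa] by blast
      then have "t \<le> norm ((1/c) *\<^sub>R x + w) - (1/c) * a1" by (rule t2)
      then have "c * t \<le> c * (norm ((1/c) *\<^sub>R x + w) - (1/c) * a1)"
        using greater by (simp add: mult_left_mono)
      also have "c * (norm ((1/c) *\<^sub>R x + w) - (1/c) * a1) = norm (c *\<^sub>R ((1/c) *\<^sub>R x + w)) - a1"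
        using greater by (simp add: right_diff_distrib)
      also have "c *\<^sub>R ((1/c) *\<^sub>R x + w) = y" using greater y by (simp add: scaleR_add_right)
      finally show ?thesis using a by simp
    next
      case less
      define d where "d = - c"
      have d: "d > 0" using less d_def by simp
      have "((1/d) *\<^sub>R x, (1/d) * a1) \<in> M" using Ms[OF xa] by blast
      then have "(1/d) * a1 - norm ((1/d) *\<^sub>R x - w) \<le> t" by (rule t1)
      then have e1: "d * ((1/d) * a1 - norm ((1/d) *\<^sub>R x - w)) \<le> d * t"
        using d by (simp add: mult_left_mono)
      have e2: "d * ((1/d) * a1 - norm ((1/d) *\<^sub>R x - w)) = a1 - d * norm ((1/d) *\<^sub>R x - w)"
        using d by (simp add: right_diff_distrib)
      have e3: "d * norm ((1/d) *\<^sub>R x - w) = norm (d *\<^sub>R ((1/d) *\<^sub>R x - w))"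
        using d by simp
      have e4: "d *\<^sub>R ((1/d) *\<^sub>R x - w) = x - d *\<^sub>R w" using d by (simp add: scaleR_diff_right)
      have e5: "y = x - d *\<^sub>R w" using y unfolding d_def by simp
      have e6: "norm y = norm (d *\<^sub>R ((1/d) *\<^sub>R x - w))" by (simp only: e4 e5)
      have "a1 - norm y \<le> d * t" using e1 e2 e3 e6 by linarith
      moreover have "a = a1 - d * t" using a unfolding d_def by simp
      ultimately show ?thesis by linarith
    qed
  next
    have "v = v + 0 *\<^sub>R w" "norm v = norm v + 0 * t" by auto
    then show "(v, norm v) \<in> G" unfolding G_def using Mv by blast
  qed
  moreover have "M \<subseteq> G"
  proof
    fix p assume "p \<in> M"
    moreover obtain x a where "p = (x,a)" by fastforce
    moreover have "x = x + 0 *\<^sub>R w" "a = a + 0 * t" by auto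
    ultimately show "p \<in> G" unfolding G_def by blast
  qed
  moreover have "(w, t) \<in> G"
  proof -
    have "w = 0 + 1 *\<^sub>R w" "t = 0 + 1 * t" by auto
    then show ?thesis unfolding G_def using M0 by blast
  qed
  ultimately show ?thesis using w by blast
qed

lemma hahn_banach_norm:
  fixes v :: "'a::real_normed_vector"
  shows "\<exists>\<phi>. bounded_linear \<phi> \<and> (\<forall>y. \<bar>\<phi> y\<bar> \<le> norm y) \<and> \<phi> v = norm v"
proof -
  have "\<forall>C\<in>chains {G. good v G}. \<exists>U\<in>{G. good v G}. \<forall>X\<in>C. X \<subseteq> U"
  proof
    fix C assume C: "C \<in> chains {G. good v G}"
    show "\<exists>U\<in>{G. good v G}. \<forall>X\<in>C. X \<subseteq> U"
    proof (cases "C = {}")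
      case True then show ?thesis using good_init by blast
    next
      case False then show ?thesis using good_union[OF C False] by blast
    qed
  qed
  from Zorn_Lemma2[OF this] obtain M where M: "good v M"
    and max: "\<And>X. good v X \<Longrightarrow> M \<subseteq> X \<Longrightarrow> X = M" by blast
  have tot: "\<exists>a. (y,a) \<in> M" for y
    using good_extend[OF M, of y] max by blast
  have Mf: "\<And>x a b. (x,a)\<in>M \<Longrightarrow> (x,b)\<in>M \<Longrightarrow> a=b"
   and Ma: "\<And>x a y b. (x,a)\<in>M \<Longrightarrow> (y,b)\<in>M \<Longrightarrow> (x+y,a+b)\<in>M"
   and Ms: "\<And>x a c. (x,a)\<in>M \<Longrightarrow> (c *\<^sub>R x, c*a)\<in>M"
   and Mn: "\<And>x a. (x,a)\<in>M \<Longrightarrow> a \<le> norm x"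
   and Mv: "(v, norm v) \<in> M" using M unfolding good_def by blast+
  define \<phi> where "\<phi> y = (THE a. (y,a) \<in> M)" for y
  have ph: "(y, \<phi> y) \<in> M" for y
    unfolding \<phi>_def using tot[of y] Mf by (metis theI)
  have phe: "\<phi> y = a" if "(y,a)\<in>M" for y a using Mf[OF ph that] .
  have add: "\<phi> (x + y) = \<phi> x + \<phi> y" for x y using phe[OF Ma[OF ph ph]] .
  have sc: "\<phi> (c *\<^sub>R x) = c * \<phi> x" for c x using phe[OF Ms[OF ph]] .
  have lin: "linear \<phi>" by (rule linearI) (use add sc in auto)
  have ab: "\<bar>\<phi> y\<bar> \<le> norm y" for y
  proof -
    have "\<phi> y \<le> norm y" using Mn[OF ph] .
    moreover have "- \<phi> y \<le> norm y" using Mn[OF ph, of "-y"] sc[of "-1" y] by simp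
    ultimately show ?thesis by linarith
  qed
  have "bounded_linear \<phi>"
  proof (rule bounded_linear_intro[where K=1])
    show "\<phi> (x + y) = \<phi> x + \<phi> y" for x y by (rule add)
    show "\<phi> (r *\<^sub>R x) = r *\<^sub>R \<phi> x" for r x using sc by simp
    show "norm (\<phi> x) \<le> norm x * 1" for x using ab by simp
  qed
  then show ?thesis using ab phe[OF Mv] by blast
qed


lemma lam_eq: assumes "(p::real) > 1" "1 / p + 1 / q = 1" shows "q / p = 1 / (p - 1)"
proof -
  have "q \<noteq> 0" using assms by auto
  have "1 / q = (p - 1) / p" using assms by (simp add: field_simps)
  then have "q = p / (p - 1)" using assms \<open>q \<noteq> 0\<close> by (simp add: field_simps)
  then show ?thesis using assms by (simp add: field_simps)
qed

theorem corollary4p2: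
  fixes f :: "'a::real_normed_vector \<Rightarrow> ereal" and xbar :: 'a and p q :: real
  assumes "proper_fun f"
    and "0 \<in> subdiff f xbar"
    and "p > 1" and "q > 1" and "1 / p + 1 / q = 1"
    and "lower_hemicontinuous_at (inv_setmap (subdiff f)) 0"
  shows "(\<exists>\<delta>::ereal. \<delta> > 0 \<and> (\<exists>\<gamma>::real. \<gamma> > 0 \<and>
            (\<forall>x\<in>eball xbar \<delta>. f x \<ge> f xbar + ereal (\<gamma> * norm (x - xbar) powr p))))
     \<longleftrightarrow> (\<exists>\<alpha>::ereal. \<alpha> > 0 \<and> (\<exists>\<kappa>::real. \<kappa> > 0 \<and>
            strongly_subregular (subdiff f) xbar (q / p) \<alpha> \<kappa>))"
proof -
  define lam where "lam = q / p"
  have lam: "lam = 1 / (p - 1)" unfolding lam_def using lam_eq assms by blast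
  have lampos: "lam > 0" using lam assms by simp
  have lamp: "(p - 1) * lam = 1" using lam assms by simp
  have pnot: "\<And>x. f x \<noteq> -\<infinity>" and "\<exists>x. f x \<noteq> \<infinity>" using assms(1) unfolding proper_fun_def by auto
  then obtain y0 where y0: "f y0 \<noteq> \<infinity>" by blast
  have fmin: "f xbar \<le> f y" for y using assms(2) unfolding subdiff_def by simp
  obtain m where m: "f xbar = ereal m"
    using fmin[of y0] y0 pnot[of xbar] by (cases "f xbar") auto
  have subfin: "\<exists>Z. f z = ereal Z \<and> (\<forall>y X. f y = ereal X \<longrightarrow> Z - blinfun_apply \<xi> z \<le> X - blinfun_apply \<xi> y)"
    if "\<xi> \<in> subdiff f z" for \<xi> z
  proof -
    have ineq: "f z - ereal (blinfun_apply \<xi> z) \<le> f y - ereal (blinfun_apply \<xi> y)" for y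
      using that unfolding subdiff_def by blast
    obtain Y0 where Y0: "f y0 = ereal Y0" using y0 pnot[of y0] by (cases "f y0") auto
    have "f z \<noteq> \<infinity>"
    proof
      assume "f z = \<infinity>"
      then show False using ineq[of y0] Y0 by simp
    qed
    then obtain Z where Z: "f z = ereal Z" using pnot[of z] by (cases "f z") auto
    show ?thesis
    proof (intro exI conjI allI impI)
      fix y X assume "f y = ereal X"
      then show "Z - blinfun_apply \<xi> z \<le> X - blinfun_apply \<xi> y" using ineq[of y] Z by simp
    qed (rule Z)
  qed
  show ?thesis
  proof
    assume "\<exists>\<delta>::ereal. \<delta> > 0 \<and> (\<exists>\<gamma>::real. \<gamma> > 0 \<and>
            (\<forall>x\<in>eball xbar \<delta>. f x \<ge> f xbar + ereal (\<gamma> * norm (x - xbar) powr p)))"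
    then obtain \<delta> \<gamma> where \<delta>: "\<delta> > 0" and \<gamma>: "\<gamma> > 0"
      and H: "\<And>x. x\<in>eball xbar \<delta> \<Longrightarrow> f x \<ge> f xbar + ereal (\<gamma> * norm (x - xbar) powr p)" by blast
    define \<kappa> where "\<kappa> = (1 / \<gamma>) powr lam"
    have \<kappa>: "\<kappa> > 0" using \<gamma> unfolding \<kappa>_def by simp
    have "strongly_subregular (subdiff f) xbar lam \<delta> \<kappa>"
      unfolding strongly_subregular_def
    proof (intro conjI ballI)
      show "0 \<in> subdiff f xbar" by (rule assms(2))
      fix x assume x: "x \<in> eball xbar \<delta>"
      show "subdiff f x = {} \<or> norm (x - xbar) \<le> \<kappa> * Inf (norm ` subdiff f x) powr lam"
      proof (cases "subdiff f x = {}")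
        case True then show ?thesis by simp
      next
        case False note ne = this
      define r where "r = norm (x - xbar)"
      define I where "I = Inf (norm ` subdiff f x)"
      have I0: "0 \<le> I" unfolding I_def using ne by (intro cInf_greatest) auto
      have "norm (x - xbar) \<le> \<kappa> * I powr lam"
      proof (cases "r = 0")
        case True then show ?thesis using \<kappa> unfolding r_def by simp
      next
        case False
        then have r: "r > 0" unfolding r_def by simp
        have bd: "\<gamma> * r powr (p - 1) \<le> norm \<xi>" if xi: "\<xi> \<in> subdiff f x" for \<xi>
        proof -
          obtain Z where Z: "f x = ereal Z" and ZZ: "Z - blinfun_apply \<xi> x \<le> m - blinfun_apply \<xi> xbar"
            using subfin[OF xi] m by blast
          have "ereal Z \<ge> ereal m + ereal (\<gamma> * r powr p)" using H[OF x] Z m unfolding r_def by simp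
          then have "\<gamma> * r powr p \<le> Z - m" by simp
          also have "\<dots> \<le> blinfun_apply \<xi> x - blinfun_apply \<xi> xbar" using ZZ by simp
          also have "\<dots> = blinfun_apply \<xi> (x - xbar)" by (simp add: blinfun.diff_right)
          also have "\<dots> \<le> norm \<xi> * r" unfolding r_def
            by (metis abs_le_iff norm_blinfun real_norm_def)
          finally have "\<gamma> * r powr p \<le> norm \<xi> * r" .
          moreover have "r powr p = r powr (p - 1) * r"
            using r powr_add[of r "p - 1" 1] by simp
          ultimately have "(\<gamma> * r powr (p - 1)) * r \<le> norm \<xi> * r" by (simp add: mult.assoc)
          then show ?thesis using r by simp
        qed
        have "\<gamma> * r powr (p - 1) \<le> I" unfolding I_def using ne bd by (intro cInf_greatest) auto
        then have "r powr (p - 1) \<le> I / \<gamma>" using \<gamma> by (simp add: field_simps)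
        then have "(r powr (p - 1)) powr lam \<le> (I / \<gamma>) powr lam"
          using lampos by (intro powr_mono2) auto
        moreover have "(r powr (p - 1)) powr lam = r" using r lamp by (simp add: powr_powr)
        moreover have "(I / \<gamma>) powr lam = \<kappa> * I powr lam"
          unfolding \<kappa>_def using I0 \<gamma> by (simp add: powr_divide divide_inverse powr_mult mult.commute)
        ultimately show ?thesis unfolding r_def by simp
      qed
      then show ?thesis unfolding I_def by simp
      qed
    qed
    then show "\<exists>\<alpha>::ereal. \<alpha> > 0 \<and> (\<exists>\<kappa>::real. \<kappa> > 0 \<and>
            strongly_subregular (subdiff f) xbar (q / p) \<alpha> \<kappa>)"
      using \<delta> \<kappa> unfolding lam_def by blast
  next
    assume "\<exists>\<alpha>::ereal. \<alpha> > 0 \<and> (\<exists>\<kappa>::real. \<kappa> > 0 \<and>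
            strongly_subregular (subdiff f) xbar (q / p) \<alpha> \<kappa>)"
    then obtain \<alpha> \<kappa> where \<alpha>: "\<alpha> > 0" and \<kappa>: "\<kappa> > 0"
      and SS: "strongly_subregular (subdiff f) xbar lam \<alpha> \<kappa>" unfolding lam_def by blast
    have SS': "norm (z - xbar) \<le> \<kappa> * Inf (norm ` subdiff f z) powr lam"
      if "z \<in> eball xbar \<alpha>" "subdiff f z \<noteq> {}" for z
      using SS that unfolding strongly_subregular_def by blast
    obtain a where a: "a > 0" "ereal a \<le> \<alpha>"
    proof (cases \<alpha>)
      case (real b) then show ?thesis using that[of b] \<alpha> by simp
    next
      case PInf then show ?thesis using that[of 1] by simp
    next
      case MInf then show ?thesis using \<alpha> by simp
    qed
    have "open (ball xbar a)" by simp
    moreover have "inv_setmap (subdiff f) 0 \<inter> ball xbar a \<noteq> {}"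
      using assms(2) a unfolding inv_setmap_def by auto
    ultimately obtain U where U: "open U" "0 \<in> U"
      and UV: "\<And>\<xi>. \<xi> \<in> U \<Longrightarrow> inv_setmap (subdiff f) \<xi> \<inter> ball xbar a \<noteq> {}"
      using assms(6) unfolding lower_hemicontinuous_at_def by metis
    obtain \<rho> where \<rho>: "\<rho> > 0" "ball 0 \<rho> \<subseteq> U" using U open_contains_ball by blast
    define \<delta> where "\<delta> = \<kappa> * \<rho> powr lam"
    define \<gamma> where "\<gamma> = (2 * \<kappa>) powr (1 - p) / 2"
    have \<delta>: "\<delta> > 0" unfolding \<delta>_def using \<kappa> \<rho> by simp
    have \<gamma>: "\<gamma> > 0" unfolding \<gamma>_def using \<kappa> by simp
    have "\<forall>x\<in>eball xbar (ereal \<delta>). f x \<ge> f xbar + ereal (\<gamma> * norm (x - xbar) powr p)"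
    proof
      fix x assume x: "x \<in> eball xbar (ereal \<delta>)"
      define r where "r = norm (x - xbar)"
      have rd: "r \<le> \<delta>" using x unfolding eball_def r_def by (simp add: dist_norm)
      show "f x \<ge> f xbar + ereal (\<gamma> * norm (x - xbar) powr p)"
      proof (cases "f x = \<infinity>")
        case True then show ?thesis by simp
      next
        case False
        then obtain X where X: "f x = ereal X" using pnot[of x] by (cases "f x") auto
        show ?thesis
        proof (cases "r = 0")
          case True
          then have "x = xbar" unfolding r_def by simp
          then show ?thesis by simp
        next
          case False
          then have r: "r > 0" unfolding r_def by simp
          obtain \<phi> where \<phi>: "bounded_linear \<phi>" "\<And>y. \<bar>\<phi> y\<bar> \<le> norm y" "\<phi> (x - xbar) = r"
            using hahn_banach_norm[of "x - xbar"] unfolding r_def by blast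
          define s where "s = (r / (2 * \<kappa>)) powr (p - 1)"
          have s0: "s > 0" unfolding s_def using r \<kappa> by simp
          define \<xi> where "\<xi> = s *\<^sub>R Blinfun \<phi>"
          have \<xi>app: "blinfun_apply \<xi> y = s * \<phi> y" for y
            unfolding \<xi>_def using \<phi>(1) by (simp add: scaleR_blinfun.rep_eq bounded_linear_Blinfun_apply)
          have n\<xi>: "norm \<xi> \<le> s"
          proof (rule norm_blinfun_bound)
            show "0 \<le> s" using s0 by simp
            fix y show "norm (blinfun_apply \<xi> y) \<le> s * norm y"
              using \<phi>(2)[of y] s0 by (simp add: \<xi>app abs_mult mult_left_mono)
          qed
          have "r / (2 * \<kappa>) < \<rho> powr lam"
            using rd \<delta> \<kappa> unfolding \<delta>_def by (simp add: field_simps)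
          then have "(r / (2 * \<kappa>)) powr (p - 1) < (\<rho> powr lam) powr (p - 1)"
            using assms(3) r \<kappa> by (intro powr_less_mono2) auto
          also have "(\<rho> powr lam) powr (p - 1) = \<rho>"
            using \<rho> lamp by (simp add: powr_powr mult.commute)
          finally have s\<rho>: "s < \<rho>" unfolding s_def .
          have "\<xi> \<in> U" using \<rho>(2) n\<xi> s\<rho> by (auto simp: dist_norm)
          from UV[OF this] obtain z where z: "\<xi> \<in> subdiff f z" "dist xbar z < a"
            unfolding inv_setmap_def by auto
          have zb: "z \<in> eball xbar \<alpha>" unfolding eball_def
            using z(2) a by (simp add: dist_commute) (meson ereal_less_eq(3) less_imp_le order_trans)
          have "norm (z - xbar) \<le> \<kappa> * Inf (norm ` subdiff f z) powr lam"
            using SS'[OF zb] z(1) by blast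
          also have "\<dots> \<le> \<kappa> * norm \<xi> powr lam"
          proof -
            have "Inf (norm ` subdiff f z) \<le> norm \<xi>"
              using z(1) by (intro cInf_lower) (auto intro: bdd_belowI[where m=0])
            moreover have "0 \<le> Inf (norm ` subdiff f z)"
              using z(1) by (intro cInf_greatest) auto
            ultimately show ?thesis using \<kappa> lampos by (simp add: powr_mono2)
          qed
          also have "\<dots> \<le> \<kappa> * s powr lam"
            using n\<xi> \<kappa> lampos by (simp add: powr_mono2)
          also have "s powr lam = r / (2 * \<kappa>)"
            unfolding s_def using r \<kappa> lamp by (simp add: powr_powr)
          finally have zr: "norm (z - xbar) \<le> r / 2" using \<kappa> by simp
          obtain Z where Z: "f z = ereal Z"
            and ZZ: "Z - blinfun_apply \<xi> z \<le> X - blinfun_apply \<xi> x"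
            using subfin[OF z(1)] X by blast
          have mZ: "m \<le> Z" using fmin[of z] m Z by simp
          have e1: "blinfun_apply \<xi> x - blinfun_apply \<xi> z
              = blinfun_apply \<xi> (x - xbar) - blinfun_apply \<xi> (z - xbar)"
            by (simp add: blinfun.diff_right)
          have e2: "blinfun_apply \<xi> (x - xbar) = s * r" using \<xi>app \<phi>(3) by simp
          have e3: "blinfun_apply \<xi> (z - xbar) \<le> s * (r / 2)"
          proof -
            have "blinfun_apply \<xi> (z - xbar) \<le> norm \<xi> * norm (z - xbar)"
              by (metis abs_le_iff norm_blinfun real_norm_def)
            also have "\<dots> \<le> s * (r / 2)"
              using n\<xi> zr s0 by (intro mult_mono) auto
            finally show ?thesis .
          qed
          have "X \<ge> m + s * r / 2" using ZZ mZ e1 e2 e3 by linarith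
          moreover have "s * r = (2 * \<kappa>) powr (1 - p) * r powr p"
          proof -
            have "s = r powr (p - 1) / (2 * \<kappa>) powr (p - 1)"
              unfolding s_def using r \<kappa> by (simp add: powr_divide)
            moreover have "r powr (p - 1) * r = r powr p"
              using r powr_add[of r "p - 1" 1] by simp
            moreover have "(2 * \<kappa>) powr (1 - p) = 1 / (2 * \<kappa>) powr (p - 1)"
              using \<kappa> by (simp add: powr_minus_divide[symmetric])
            ultimately show ?thesis by (simp add: field_simps)
          qed
          ultimately have "X \<ge> m + \<gamma> * r powr p" unfolding \<gamma>_def by simp
          then show ?thesis using X m unfolding r_def by simp
        qed
      qed
    qed
    then show "\<exists>\<delta>::ereal. \<delta> > 0 \<and> (\<exists>\<gamma>::real. \<gamma> > 0 \<and>
            (\<forall>x\<in>eball xbar \<delta>. f x \<ge> f xbar + ereal (\<gamma> * norm (x - xbar) powr p)))"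
      using \<delta> \<gamma> by (intro exI[of _ "ereal \<delta>"]) auto
  qed
qed

end
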